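(* Let $(X,P)$ be an $(N,s)$-pre-tiling space, let $Y$ be a metric space, and let $f:X\to Y$ be a surjective $(L,\gamma)$-homogeneously bi-Hölder map. Define the covering structure $Q$ on $Y$ by $\mathrm{dom}(Q)=\mathrm{dom}(P)$ and $Q_n=\{f(A):A\in P_n\}$. Then $(Y,Q)$ is an $(N,s^\gamma)$-pre-tiling space.
   Context: For $L\ge1$, $\gamma>0$, a map $f:X\to Y$ is $(L,\gamma)$-homogeneously bi-Hölder if $L^{-1}d_X(x,y)^\gamma\le d_Y(f(x),f(y))\le Ld_X(x,y)^\gamma$ for all $x,y\in X$. $\mathbb{N}=\{0,1,\dots\}$. A covering structure on a set $Z$ is a map $P$ from $\mathbb{N}$ or $\mathbb{Z}$ to coverings of $Z$; $P_n$ its value, $\mathrm{dom}(P)$ its domain; $[T]_k=\{A\in P_{n+k}:A\subset T\}$ for $T\in P_n$. $(Z,P)$ is an $N$-tiling set if (S1) for $n<m$ in $\mathrm{dom}(P)$, $A\in P_n$: $\mathrm{card}[A]_{m-n}=N^{m-n}$ and $A=\bigcup[A]_{m-n}$; (S2) for $A,B\in P_n$ there exist $m$ and $C\in P_m$ with $A\cup B\subset C$. For $Z$ a metric space ($\delta$ = diameter, $U(p,r)$ open ball), $s\in(0,\infty)$, an $N$-tiling set is an $(N,s)$-pre-tiling space if (T1) there are $D_1,D_2>0$ with $D_1\le\delta(A)/s^n\le D_2$ for all $n\in\mathrm{dom}(P)$, $A\in P_n$; (T2) there is $E>0$ such that every $A\in P_n$ contains some $p_A$ with $U(p_A,Es^n)\subset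 A$. *)

theory Defs
  imports "HOL-Analysis.Analysis"
begin

text \<open>Metric spaces are modelled as carrier sets X inside a type of class metric_space.
  A covering structure on Z is a pair (D, P) with D the domain (the naturals {0..} or all
  integers, as a set of integers) and P n a covering of Z for each n in D.\<close>

definition homog_bi_holder :: "real \<Rightarrow> real \<Rightarrow> 'a::metric_space set \<Rightarrow> ('a \<Rightarrow> 'b::metric_space) \<Rightarrow> bool" where
  "homog_bi_holder L \<gamma> X f \<longleftrightarrow> L \<ge> 1 \<and> \<gamma> > 0 \<and>
     (\<forall>x\<in>X. \<forall>y\<in>X. inverse L * dist x y powr \<gamma> \<le> dist (f x) (f y)
                  \<and> dist (f x) (f y) \<le> L * dist x y powr \<gamma>)"

definition covering_structure :: "int set \<Rightarrow> 'a set \<Rightarrow> (int \<Rightarrow> 'a set set) \<Rightarrow> bool" where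
  "covering_structure D Z P \<longleftrightarrow> (D = {0..} \<or> D = UNIV) \<and>
     (\<forall>n\<in>D. (\<forall>A\<in>P n. A \<subseteq> Z) \<and> \<Union>(P n) = Z)"

definition subtiles :: "(int \<Rightarrow> 'a set set) \<Rightarrow> int \<Rightarrow> nat \<Rightarrow> 'a set \<Rightarrow> 'a set set" where
  "subtiles P n k T = {A \<in> P (n + int k). A \<subseteq> T}"

definition tiling_set :: "nat \<Rightarrow> int set \<Rightarrow> 'a set \<Rightarrow> (int \<Rightarrow> 'a set set) \<Rightarrow> bool" where
  "tiling_set N D Z P \<longleftrightarrow> covering_structure D Z P \<and>
     (\<forall>n\<in>D. \<forall>m\<in>D. n < m \<longrightarrow> (\<forall>A\<in>P n.
         finite (subtiles P n (nat (m - n)) A) \<and>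
         card (subtiles P n (nat (m - n)) A) = N ^ nat (m - n) \<and>
         A = \<Union>(subtiles P n (nat (m - n)) A))) \<and>
     (\<forall>n\<in>D. \<forall>A\<in>P n. \<forall>B\<in>P n. \<exists>m\<in>D. \<exists>C\<in>P m. A \<union> B \<subseteq> C)"

definition pre_tiling_space :: "nat \<Rightarrow> real \<Rightarrow> int set \<Rightarrow> 'a::metric_space set \<Rightarrow> (int \<Rightarrow> 'a set set) \<Rightarrow> bool" where
  "pre_tiling_space N s D Z P \<longleftrightarrow> s > 0 \<and> tiling_set N D Z P \<and>
     (\<exists>D1 D2. D1 > 0 \<and> D2 > 0 \<and> (\<forall>n\<in>D. \<forall>A\<in>P n.
        D1 \<le> diameter A / s powr (real_of_int n) \<and> diameter A / s powr (real_of_int n) \<le> D2)) \<and>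
     (\<exists>E>0. \<forall>n\<in>D. \<forall>A\<in>P n. \<exists>p\<in>A. ball p (E * s powr (real_of_int n)) \<inter> Z \<subseteq> A)"

end

theory Submission
  imports Defs
begin

lemma diam_le_aux:
  fixes S :: "'a::metric_space set"
  assumes "\<And>x y. x \<in> S \<Longrightarrow> y \<in> S \<Longrightarrow> dist x y \<le> d" "0 \<le> d"
  shows "diameter S \<le> d"
  using assms unfolding diameter_def by (auto intro!: cSUP_least)

lemma hb_diam:
  fixes X :: "'a::metric_space set" and f :: "'a \<Rightarrow> 'b::metric_space"
  assumes hb: "homog_bi_holder L \<gamma> X f" and AX: "A \<subseteq> X" and bA: "bounded A"
  shows "bounded (f ` A)" "diameter (f ` A) \<le> L * diameter A powr \<gamma>"
    "diameter A powr \<gamma> \<le> L * diameter (f ` A)"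
proof -
  have L: "L \<ge> 1" and g: "\<gamma> > 0" and
    H: "\<And>x y. x \<in> X \<Longrightarrow> y \<in> X \<Longrightarrow> inverse L * dist x y powr \<gamma> \<le> dist (f x) (f y)
          \<and> dist (f x) (f y) \<le> L * dist x y powr \<gamma>"
    using hb unfolding homog_bi_holder_def by auto
  have up: "dist (f x) (f y) \<le> L * diameter A powr \<gamma>" if "x \<in> A" "y \<in> A" for x y
  proof -
    have "dist (f x) (f y) \<le> L * dist x y powr \<gamma>" using H that AX by blast
    also have "\<dots> \<le> L * diameter A powr \<gamma>"
      using diameter_bounded_bound[OF bA that] g L
      by (intro mult_left_mono powr_mono2) auto
    finally show ?thesis .
  qed
  show bf: "bounded (f ` A)"
  proof (cases "A = {}")
    case True then show ?thesis by simp
  next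
    case False
    then obtain a where a: "a \<in> A" by auto
    show ?thesis unfolding bounded_def
      by (rule exI[of _ "f a"], rule exI[of _ "L * diameter A powr \<gamma>"]) (use up a in auto)
  qed
  show "diameter (f ` A) \<le> L * diameter A powr \<gamma>"
    using up L by (intro diam_le_aux) auto
  have "dist x y \<le> (L * diameter (f ` A)) powr (1/\<gamma>)" if "x \<in> A" "y \<in> A" for x y
  proof -
    have "inverse L * dist x y powr \<gamma> \<le> dist (f x) (f y)" using H that AX by blast
    also have "\<dots> \<le> diameter (f ` A)" using diameter_bounded_bound[OF bf] that by auto
    finally have "dist x y powr \<gamma> \<le> L * diameter (f ` A)" using L
      by (simp add: field_simps)
    hence "(dist x y powr \<gamma>) powr (1/\<gamma>) \<le> (L * diameter (f ` A)) powr (1/\<gamma>)"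
      using g by (intro powr_mono2) auto
    thus ?thesis using g by (simp add: powr_powr)
  qed
  hence "diameter A \<le> (L * diameter (f ` A)) powr (1/\<gamma>)"
    by (intro diam_le_aux) auto
  hence "diameter A powr \<gamma> \<le> ((L * diameter (f ` A)) powr (1/\<gamma>)) powr \<gamma>"
    using g diameter_ge_0[OF bA] by (intro powr_mono2) auto
  also have "\<dots> = L * diameter (f ` A)"
    using g L diameter_ge_0[OF bf] by (simp add: powr_powr)
  finally show "diameter A powr \<gamma> \<le> L * diameter (f ` A)" .
qed

lemma s_one:
  fixes s a b :: real
  assumes s: "s > 0" and a: "a > 0" and H: "\<And>k::nat. a \<le> s ^ k \<and> s ^ k \<le> b"
  shows "s = 1"
proof (rule ccontr)
  assume ne: "s \<noteq> 1"
  show False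
  proof (cases "s > 1")
    case True
    obtain k where k: "b < of_nat k * (s - 1)" using ex_less_of_nat_mult[of "s - 1" b] True by auto
    have "1 + of_nat k * (s - 1) \<le> (1 + (s - 1)) ^ k" using True by (intro Bernoulli_inequality) auto
    then show False using H[of k] k by simp
  next
    case False
    hence s1: "s < 1" using ne by simp
    define r where "r = 1 / s"
    have r: "r > 1" using s s1 by (simp add: r_def)
    obtain k where k: "1 / a < of_nat k * (r - 1)" using ex_less_of_nat_mult[of "r - 1" "1/a"] r by auto
    have "1 + of_nat k * (r - 1) \<le> (1 + (r - 1)) ^ k" using r by (intro Bernoulli_inequality) auto
    hence "of_nat k * (r - 1) < r ^ k" by simp
    also have "r ^ k = 1 / s ^ k" by (simp add: r_def power_one_over)
    also have "\<dots> \<le> 1 / a" using H[of k] a by (intro divide_left_mono) auto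
    finally show False using k by simp
  qed
qed

lemma unb_diam:
  fixes S :: "'a::metric_space set"
  assumes "\<not> bounded S"
  shows "diameter S = (LEAST z::real. False)"
proof -
  have ne: "S \<noteq> {}" using assms by auto
  then obtain a where a: "a \<in> S" by auto
  have eq: "(\<lambda>z::real. \<forall>x\<in>S. \<forall>y\<in>S. dist x y \<le> z) = (\<lambda>z. False)"
  proof (rule ext)
    fix z :: real
    show "(\<forall>x\<in>S. \<forall>y\<in>S. dist x y \<le> z) = False"
    proof (rule iffI)
      assume h: "\<forall>x\<in>S. \<forall>y\<in>S. dist x y \<le> z"
      have "S \<subseteq> cball a z" using h a by (auto simp: mem_cball)
      hence "bounded S" using bounded_cball bounded_subset by blast
      thus False using assms by simp
    qed simp
  qed
  show ?thesis unfolding diameter_def using ne by (simp add: Sup_real_def) (simp only: eq)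
qed

lemma hb_back:
  fixes X :: "'a::metric_space set" and f :: "'a \<Rightarrow> 'b::metric_space"
  assumes hb: "homog_bi_holder L \<gamma> X f" and AX: "A \<subseteq> X" and bf: "bounded (f ` A)"
  shows "bounded A"
proof (cases "A = {}")
  case True then show ?thesis by simp
next
  case False
  then obtain a where a: "a \<in> A" by auto
  have L: "L \<ge> 1" and g: "\<gamma> > 0" and
    H: "\<And>x y. x \<in> X \<Longrightarrow> y \<in> X \<Longrightarrow> inverse L * dist x y powr \<gamma> \<le> dist (f x) (f y)"
    using hb unfolding homog_bi_holder_def by auto
  have "dist a x \<le> (L * diameter (f ` A)) powr (1/\<gamma>)" if "x \<in> A" for x
  proof -
    have "inverse L * dist a x powr \<gamma> \<le> dist (f a) (f x)" using H that a AX by blast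
    also have "\<dots> \<le> diameter (f ` A)" using diameter_bounded_bound[OF bf] that a by auto
    finally have "dist a x powr \<gamma> \<le> L * diameter (f ` A)" using L
      by (simp add: field_simps)
    hence "(dist a x powr \<gamma>) powr (1/\<gamma>) \<le> (L * diameter (f ` A)) powr (1/\<gamma>)"
      using g by (intro powr_mono2) auto
    thus ?thesis using g by (simp add: powr_powr)
  qed
  then show ?thesis unfolding bounded_def by blast
qed

theorem proposition3p11:
  fixes X :: "'a::metric_space set" and Y :: "'b::metric_space set"
    and P :: "int \<Rightarrow> 'a set set" and D :: "int set"
    and N :: nat and s L \<gamma> :: real and f :: "'a \<Rightarrow> 'b"
  assumes "pre_tiling_space N s D X P"
    and "homog_bi_holder L \<gamma> X f"
    and "f ` X = Y"
  shows "pre_tiling_space N (s powr \<gamma>) D Y (\<lambda>n. (\<lambda>A. f ` A) ` P n)"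
proof -
  have s: "s > 0" and ts: "tiling_set N D X P" and
    T1: "\<exists>D1 D2. D1 > 0 \<and> D2 > 0 \<and> (\<forall>n\<in>D. \<forall>A\<in>P n.
        D1 \<le> diameter A / s powr (real_of_int n) \<and> diameter A / s powr (real_of_int n) \<le> D2)" and
    T2: "\<exists>E>0. \<forall>n\<in>D. \<forall>A\<in>P n. \<exists>p\<in>A. ball p (E * s powr (real_of_int n)) \<inter> X \<subseteq> A"
    using assms(1) unfolding pre_tiling_space_def by auto
  have hb: "homog_bi_holder L \<gamma> X f" by fact
  have L: "L \<ge> 1" and g: "\<gamma> > 0" and
    H: "\<And>x y. x \<in> X \<Longrightarrow> y \<in> X \<Longrightarrow> inverse L * dist x y powr \<gamma> \<le> dist (f x) (f y)
          \<and> dist (f x) (f y) \<le> L * dist x y powr \<gamma>"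
    using hb unfolding homog_bi_holder_def by auto
  have cs: "covering_structure D X P" using ts unfolding tiling_set_def by auto
  have sub: "\<And>n A. n \<in> D \<Longrightarrow> A \<in> P n \<Longrightarrow> A \<subseteq> X"
    using cs unfolding covering_structure_def by auto
  have inj: "inj_on f X"
  proof (rule inj_onI)
    fix x y assume xy: "x \<in> X" "y \<in> X" "f x = f y"
    have "inverse L * dist x y powr \<gamma> \<le> 0" using H[OF xy(1,2)] xy(3) by simp
    moreover have "inverse L > 0" using L by simp
    ultimately have "dist x y powr \<gamma> \<le> 0" by (simp add: mult_le_0_iff)
    thus "x = y" by simp
  qed
  have imgsub: "f ` A \<subseteq> f ` B \<longleftrightarrow> A \<subseteq> B" if "A \<subseteq> X" "B \<subseteq> X" for A B
    using inj that by (metis inj_on_image_subset_iff)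
  have injimg: "inj_on (\<lambda>A. f ` A) (Pow X)"
  proof (rule inj_onI)
    fix A B assume AB: "A \<in> Pow X" "B \<in> Pow X" "f ` A = f ` B"
    have "A \<subseteq> B" using imgsub[of A B] AB by auto
    moreover have "B \<subseteq> A" using imgsub[of B A] AB by auto
    ultimately show "A = B" by blast
  qed
  define Q where "Q = (\<lambda>n. (\<lambda>A. f ` A) ` P n)"
  have stQ: "subtiles Q n k (f ` A) = (\<lambda>A. f ` A) ` subtiles P n k A"
    if "n \<in> D" "n + int k \<in> D" "A \<subseteq> X" for n k A
    using imgsub sub[OF that(2)] that(3) unfolding subtiles_def Q_def by auto
  have cQ: "covering_structure D Y Q"
    unfolding covering_structure_def
  proof (intro conjI ballI)
    show "D = {0..} \<or> D = UNIV" using cs unfolding covering_structure_def by auto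
  next
    fix n B assume n: "n \<in> D" and B: "B \<in> Q n"
    then show "B \<subseteq> Y" using sub assms(3) unfolding Q_def by auto
  next
    fix n assume n: "n \<in> D"
    have U: "\<Union>(P n) = X" using cs n unfolding covering_structure_def by auto
    have "\<Union>(Q n) = f ` \<Union>(P n)" unfolding Q_def by auto
    then show "\<Union>(Q n) = Y" using U assms(3) by simp
  qed
  have S1: "finite (subtiles Q n (nat (m - n)) B) \<and>
         card (subtiles Q n (nat (m - n)) B) = N ^ nat (m - n) \<and>
         B = \<Union>(subtiles Q n (nat (m - n)) B)"
    if nm: "n \<in> D" "m \<in> D" "n < m" and B: "B \<in> Q n" for n m B
  proof -
    obtain A where A: "A \<in> P n" "B = f ` A" using B unfolding Q_def by auto
    have AX: "A \<subseteq> X" using sub nm A by auto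
    have e: "n + int (nat (m - n)) = m" using nm by simp
    have st: "subtiles Q n (nat (m - n)) B = (\<lambda>A. f ` A) ` subtiles P n (nat (m - n)) A"
      using stQ[of n "nat (m - n)" A] nm AX A e by simp
    have P1: "finite (subtiles P n (nat (m - n)) A) \<and>
         card (subtiles P n (nat (m - n)) A) = N ^ nat (m - n) \<and>
         A = \<Union>(subtiles P n (nat (m - n)) A)"
      using ts nm A unfolding tiling_set_def by auto
    have ss: "subtiles P n (nat (m - n)) A \<subseteq> Pow X"
      using sub[of m] nm e unfolding subtiles_def by auto
    have ij: "inj_on (\<lambda>A. f ` A) (subtiles P n (nat (m - n)) A)"
      using inj_on_subset[OF injimg ss] .
    show "finite (subtiles Q n (nat (m - n)) B) \<and>
         card (subtiles Q n (nat (m - n)) B) = N ^ nat (m - n) \<and>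
         B = \<Union>(subtiles Q n (nat (m - n)) B)"
      unfolding st using P1 ij A(2) by (auto simp: card_image)
  qed
  have S2: "\<exists>m\<in>D. \<exists>C\<in>Q m. B1 \<union> B2 \<subseteq> C"
    if n: "n \<in> D" and B: "B1 \<in> Q n" "B2 \<in> Q n" for n B1 B2
  proof -
    obtain A1 A2 where A: "A1 \<in> P n" "A2 \<in> P n" "B1 = f ` A1" "B2 = f ` A2"
      using B unfolding Q_def by auto
    then obtain m C where "m \<in> D" "C \<in> P m" "A1 \<union> A2 \<subseteq> C"
      using ts n unfolding tiling_set_def by meson
    thus "\<exists>m\<in>D. \<exists>C\<in>Q m. B1 \<union> B2 \<subseteq> C"
      unfolding Q_def using A by blast
  qed
  have tQ: "tiling_set N D Y Q"
    unfolding tiling_set_def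
  proof (rule conjI[OF cQ], rule conjI)
    show "\<forall>n\<in>D. \<forall>m\<in>D. n < m \<longrightarrow> (\<forall>A\<in>Q n.
         finite (subtiles Q n (nat (m - n)) A) \<and>
         card (subtiles Q n (nat (m - n)) A) = N ^ nat (m - n) \<and>
         A = \<Union>(subtiles Q n (nat (m - n)) A))"
      using S1 by (simp only: Ball_def imp_conjR) blast
    show "\<forall>n\<in>D. \<forall>A\<in>Q n. \<forall>B\<in>Q n. \<exists>m\<in>D. \<exists>C\<in>Q m. A \<union> B \<subseteq> C"
      using S2 by blast
  qed
  have powr_eq: "(s powr \<gamma>) powr real_of_int n = (s powr real_of_int n) powr \<gamma>" for n
    by (simp add: powr_powr mult.commute)
  from T1 obtain D1 D2 where D: "D1 > 0" "D2 > 0" "\<forall>n\<in>D. \<forall>A\<in>P n.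
        D1 \<le> diameter A / s powr (real_of_int n) \<and> diameter A / s powr (real_of_int n) \<le> D2"
    by blast
  have T1Q: "\<forall>n\<in>D. \<forall>B\<in>Q n.
        min D1 (inverse L * D1 powr \<gamma>) \<le> diameter B / (s powr \<gamma>) powr (real_of_int n) \<and>
        diameter B / (s powr \<gamma>) powr (real_of_int n) \<le> max D2 (L * D2 powr \<gamma>)"
  proof (intro ballI)
    fix n B assume n: "n \<in> D" and B: "B \<in> Q n"
    then obtain A where A: "A \<in> P n" "B = f ` A" unfolding Q_def by auto
    define t where "t = s powr real_of_int n"
    have t: "t > 0" using s by (simp add: t_def)
    have q: "D1 \<le> diameter A / t" "diameter A / t \<le> D2"
      using D(3) n A unfolding t_def by auto
    have dA: "D1 * t \<le> diameter A" "diameter A \<le> D2 * t"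
      using q t by (auto simp: field_simps)
    have dpos: "diameter A > 0" using dA(1) mult_pos_pos[OF D(1) t] by linarith
    have AX: "A \<subseteq> X" using sub n A by auto
    show "min D1 (inverse L * D1 powr \<gamma>) \<le> diameter B / (s powr \<gamma>) powr (real_of_int n) \<and>
        diameter B / (s powr \<gamma>) powr (real_of_int n) \<le> max D2 (L * D2 powr \<gamma>)"
    proof (cases "bounded A")
      case bA: True
      note hd = hb_diam[OF hb AX bA]
      have tg: "t powr \<gamma> > 0" using t by simp
      have "diameter B \<le> L * diameter A powr \<gamma>" using hd A by simp
      also have "\<dots> \<le> L * (D2 * t) powr \<gamma>"
        using dA dpos g L by (intro mult_left_mono powr_mono2) auto
      also have "\<dots> = (L * D2 powr \<gamma>) * t powr \<gamma>"
        using D t by (simp add: powr_mult)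
      finally have up: "diameter B / t powr \<gamma> \<le> L * D2 powr \<gamma>"
        using tg by (simp add: divide_le_eq)
      have "D1 powr \<gamma> * t powr \<gamma> = (D1 * t) powr \<gamma>"
        using D t by (simp add: powr_mult)
      also have "\<dots> \<le> diameter A powr \<gamma>"
        using dA D t g by (intro powr_mono2) auto
      also have "\<dots> \<le> L * diameter B" using hd A by simp
      finally have "(inverse L * D1 powr \<gamma>) * t powr \<gamma> \<le> diameter B"
        using L by (simp add: field_simps)
      hence lo: "inverse L * D1 powr \<gamma> \<le> diameter B / t powr \<gamma>"
        using tg by (simp add: le_divide_eq)
      show ?thesis
        using up lo unfolding powr_eq t_def by (auto simp: min_le_iff_disj le_max_iff_disj)
    next
      case nb: False
      have nbB: "\<not> bounded B" using hb_back[OF hb AX] nb A by auto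
      have dBA: "diameter B = diameter A" using unb_diam[OF nb] unb_diam[OF nbB] by simp
      have Dform: "D = {0..} \<or> D = UNIV" using cs unfolding covering_structure_def by auto
      have lev: "\<exists>A'\<in>P (n + int k). \<not> bounded A'" for k
      proof (cases "k = 0")
        case True then show ?thesis using A nb by auto
      next
        case False
        define m where "m = n + int k"
        have mD: "m \<in> D" using Dform n unfolding m_def by auto
        have nm: "n < m" using False unfolding m_def by simp
        have kk: "nat (m - n) = k" unfolding m_def by simp
        have P1: "finite (subtiles P n k A) \<and> A = \<Union>(subtiles P n k A)"
        proof -
          have "\<forall>n\<in>D. \<forall>m\<in>D. n < m \<longrightarrow> (\<forall>A\<in>P n.
             finite (subtiles P n (nat (m - n)) A) \<and>
             card (subtiles P n (nat (m - n)) A) = N ^ nat (m - n) \<and>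
             A = \<Union>(subtiles P n (nat (m - n)) A))"
            using ts unfolding tiling_set_def by (elim conjE)
          hence "finite (subtiles P n (nat (m - n)) A) \<and>
             A = \<Union>(subtiles P n (nat (m - n)) A)"
            using n mD nm A by auto
          thus ?thesis unfolding kk .
        qed
        have "\<exists>A'\<in>subtiles P n k A. \<not> bounded A'"
        proof (rule ccontr)
          assume "\<not> ?thesis"
          hence "bounded (\<Union>(subtiles P n k A))" using P1 by (intro bounded_Union) auto
          thus False using P1 nb by simp
        qed
        then show ?thesis unfolding subtiles_def by auto
      qed
      have sk: "diameter A / (t * D2) \<le> s ^ k \<and> s ^ k \<le> diameter A / (t * D1)" for k
      proof -
        obtain A' where A': "A' \<in> P (n + int k)" "\<not> bounded A'" using lev by blast
        have nkD: "n + int k \<in> D" using Dform n by auto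
        have dA': "diameter A' = diameter A" using unb_diam[OF A'(2)] unb_diam[OF nb] by simp
        have eqp: "s powr real_of_int (n + int k) = t * s ^ k"
          unfolding t_def using s by (simp add: powr_add powr_realpow)
        have tk: "t * s ^ k > 0" using t s by simp
        have "D1 \<le> diameter A / (t * s ^ k)" "diameter A / (t * s ^ k) \<le> D2"
        proof -
          have "D1 \<le> diameter A' / s powr real_of_int (n + int k) \<and>
                diameter A' / s powr real_of_int (n + int k) \<le> D2"
            using D(3) nkD A'(1) by blast
          thus "D1 \<le> diameter A / (t * s ^ k)" "diameter A / (t * s ^ k) \<le> D2"
            unfolding eqp dA' by auto
        qed
        thus ?thesis using tk t D(1,2) by (auto simp: field_simps)
      qed
      have s1: "s = 1"
        by (rule s_one[OF s _ sk]) (use dpos t D(2) in simp)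
      have "diameter B / (s powr \<gamma>) powr (real_of_int n) = diameter A / t"
        using dBA unfolding t_def s1 by simp
      then show ?thesis using q by linarith
    qed
  qed
  from T2 obtain E where E: "E > 0" "\<forall>n\<in>D. \<forall>A\<in>P n. \<exists>p\<in>A. ball p (E * s powr (real_of_int n)) \<inter> X \<subseteq> A"
    by blast
  have T2Q: "\<forall>n\<in>D. \<forall>B\<in>Q n. \<exists>q\<in>B. ball q ((inverse L * E powr \<gamma>) * (s powr \<gamma>) powr (real_of_int n)) \<inter> Y \<subseteq> B"
  proof (intro ballI)
    fix n B assume n: "n \<in> D" and B: "B \<in> Q n"
    then obtain A where A: "A \<in> P n" "B = f ` A" unfolding Q_def by auto
    obtain p where p: "p \<in> A" "ball p (E * s powr (real_of_int n)) \<inter> X \<subseteq> A"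
      using E n A by blast
    define t where "t = s powr real_of_int n"
    have t: "t > 0" using s by (simp add: t_def)
    have AX: "A \<subseteq> X" using sub n A by auto
    have "ball (f p) ((inverse L * E powr \<gamma>) * t powr \<gamma>) \<inter> Y \<subseteq> B"
    proof
      fix y assume y: "y \<in> ball (f p) ((inverse L * E powr \<gamma>) * t powr \<gamma>) \<inter> Y"
      then obtain x where x: "x \<in> X" "y = f x" using assms(3) by auto
      have "inverse L * dist p x powr \<gamma> \<le> dist (f p) (f x)" using H[of p x] x p AX by auto
      also have "\<dots> < (inverse L * E powr \<gamma>) * t powr \<gamma>" using y x by (simp add: dist_commute)
      finally have "dist p x powr \<gamma> < (E * t) powr \<gamma>"
        using L E t by (simp add: powr_mult)
      hence "dist p x < E * t"
      proof (rule contrapos_pp)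
        assume "\<not> dist p x < E * t"
        hence "E * t \<le> dist p x" by simp
        hence "(E * t) powr \<gamma> \<le> dist p x powr \<gamma>" using g E t by (intro powr_mono2) auto
        thus "\<not> dist p x powr \<gamma> < (E * t) powr \<gamma>" by simp
      qed
      hence "x \<in> A" using p x unfolding t_def by (auto simp: dist_commute)
      thus "y \<in> B" using A x by auto
    qed
    thus "\<exists>q\<in>B. ball q ((inverse L * E powr \<gamma>) * (s powr \<gamma>) powr (real_of_int n)) \<inter> Y \<subseteq> B"
      using p A unfolding powr_eq t_def by auto
  qed
  have "inverse L * E powr \<gamma> > 0" "min D1 (inverse L * D1 powr \<gamma>) > 0" "max D2 (L * D2 powr \<gamma>) > 0"
    using L E D by auto
  note pos = this
  have sg: "s powr \<gamma> > 0" using s by simp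
  have e1: "\<exists>D1 D2. D1 > 0 \<and> D2 > 0 \<and> (\<forall>n\<in>D. \<forall>A\<in>Q n.
        D1 \<le> diameter A / (s powr \<gamma>) powr (real_of_int n) \<and> diameter A / (s powr \<gamma>) powr (real_of_int n) \<le> D2)"
    using pos(2,3) T1Q by blast
  have e2: "\<exists>E>0. \<forall>n\<in>D. \<forall>A\<in>Q n. \<exists>p\<in>A. ball p (E * (s powr \<gamma>) powr (real_of_int n)) \<inter> Y \<subseteq> A"
    using pos(1) T2Q by blast
  show ?thesis
    unfolding pre_tiling_space_def Q_def[symmetric]
    using sg tQ e1 e2 by blast
qed

end
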